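(* Let $X_1,\dots,X_N$ be i.i.d. with distribution function $F$, $0<\alpha<\beta<1$, and suppose $f=F'$ exists in neighborhoods of $\xi_\alpha$ and $\xi_\beta$, satisfies a Lipschitz condition there, and $f(\xi_\alpha)>0$, $f(\xi_\beta)>0$. Let $r$ be a positive integer, $\mu_{r,W}=EW_1^r$ and $\hat\mu_{r,W}=\frac kNX_{k:N}^r+\frac1N\sum_{i=k+1}^{m-1}X_{i:N}^r+\frac{N-m+1}NX_{m:N}^r$. Then for every $c>0$ there is $A>0$ not depending on $N$ with $$P\big(|\hat\mu_{r,W}-\mu_{r,W}|>A(\log N/N)^{1/2}\big)=O(N^{-c})\quad\text{as }N\to\infty.$$
   Context: $X_{1:N}\le\dots\le X_{N:N}$ are the order statistics, $k=[\alpha N]+1$, $m=[\beta N]$ ($[\cdot]$ integer part), $\xi_\nu=F^{-1}(\nu)$ with $F^{-1}(u)=\inf\{x:F(x)\ge u\}$. $W_1$ is $X_1$ Winsorized outside $(\xi_\alpha,\xi_\beta]$: $W_1=\xi_\alpha$ if $X_1\le\xi_\alpha$, $W_1=X_1$ if $\xi_\alpha<X_1\le\xi_\beta$, $W_1=\xi_\beta$ if $X_1>\xi_\beta$. *)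

theory Defs
  imports "HOL-Probability.Probability" "HOL-Library.Landau_Symbols"
begin

definition quantile :: "(real \<Rightarrow> real) \<Rightarrow> real \<Rightarrow> real" where
  "quantile F u = Inf {x. F x \<ge> u}"

text \<open>i-th order statistic (1-based) X_{i:N} of the sample X 1, ..., X N.\<close>
definition order_stat :: "(nat \<Rightarrow> 'a \<Rightarrow> real) \<Rightarrow> nat \<Rightarrow> nat \<Rightarrow> 'a \<Rightarrow> real" where
  "order_stat X N i \<omega> = sort (map (\<lambda>j. X j \<omega>) [1..<N+1]) ! (i - 1)"

definition winsor :: "real \<Rightarrow> real \<Rightarrow> real \<Rightarrow> real" where
  "winsor a b x = (if x \<le> a then a else if x \<le> b then x else b)"

definition winsor_moment_est ::
  "(nat \<Rightarrow> 'a \<Rightarrow> real) \<Rightarrow> real \<Rightarrow> real \<Rightarrow> nat \<Rightarrow> nat \<Rightarrow> 'a \<Rightarrow> real" where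
  "winsor_moment_est X \<alpha> \<beta> r N \<omega> =
     (let k = nat \<lfloor>\<alpha> * real N\<rfloor> + 1; m = nat \<lfloor>\<beta> * real N\<rfloor> in
        real k / real N * order_stat X N k \<omega> ^ r
      + 1 / real N * (\<Sum>i\<in>{k+1..m-1}. order_stat X N i \<omega> ^ r)
      + real (N - m + 1) / real N * order_stat X N m \<omega> ^ r)"

end

theory Submission
  imports Defs "HOL-Real_Asymp.Real_Asymp"
begin

lemma sorted_nth_le_iff:
  fixes xs :: "real list"
  assumes "1 \<le> k" "k \<le> length xs"
  shows "sort xs ! (k - 1) \<le> x \<longleftrightarrow> k \<le> length (filter (\<lambda>v. v \<le> x) xs)"
proof -
  define ys where "ys = sort xs"
  have s: "sorted ys" and l: "length ys = length xs" by (auto simp: ys_def)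
  have "length (filter (\<lambda>v. v \<le> x) xs) = length (filter (\<lambda>v. v \<le> x) ys)"
    unfolding ys_def by (metis mset_filter mset_sort size_mset)
  also have "\<dots> = card {i. i < length ys \<and> ys ! i \<le> x}" by (rule length_filter_conv_card)
  finally have c: "length (filter (\<lambda>v. v \<le> x) xs) = card {i. i < length ys \<and> ys ! i \<le> x}" .
  show ?thesis
  proof
    assume h: "sort xs ! (k - 1) \<le> x"
    have "{..<k} \<subseteq> {i. i < length ys \<and> ys ! i \<le> x}"
    proof
      fix i assume "i \<in> {..<k}"
      then have "i \<le> k - 1" "i < length ys" using assms l by auto
      then have "ys ! i \<le> ys ! (k - 1)" using s assms l by (intro sorted_nth_mono) auto
      then show "i \<in> {i. i < length ys \<and> ys ! i \<le> x}" using h \<open>i < length ys\<close> by (auto simp: ys_def)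
    qed
    from card_mono[OF _ this] show "k \<le> length (filter (\<lambda>v. v \<le> x) xs)" unfolding c by auto
  next
    assume h: "k \<le> length (filter (\<lambda>v. v \<le> x) xs)"
    show "sort xs ! (k - 1) \<le> x"
    proof (rule ccontr)
      assume "\<not> ?thesis"
      then have g: "ys ! (k - 1) > x" by (simp add: ys_def)
      have "{i. i < length ys \<and> ys ! i \<le> x} \<subseteq> {..<k-1}"
      proof
        fix i assume i: "i \<in> {i. i < length ys \<and> ys ! i \<le> x}"
        show "i \<in> {..<k-1}"
        proof (rule ccontr)
          assume "i \<notin> {..<k-1}"
          then have "ys ! (k-1) \<le> ys ! i" using s i by (intro sorted_nth_mono) auto
          then show False using g i by auto
        qed
      qed
      from card_mono[OF _ this] have "card {i. i < length ys \<and> ys ! i \<le> x} \<le> k - 1" by simp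
      then show False using h c assms by simp
    qed
  qed
qed

lemma count_map_upt:
  "length (filter (\<lambda>v. v \<le> x) (map (\<lambda>j. X j \<omega>) [1..<N+1])) = card {j\<in>{1..N}. X j \<omega> \<le> (x::real)}"
proof -
  have "length (filter (\<lambda>v. v \<le> x) (map (\<lambda>j. X j \<omega>) [1..<N+1])) =
        length (filter (\<lambda>j. X j \<omega> \<le> x) [1..<N+1])" by (simp only: filter_map length_map o_def)
  also have "\<dots> = card ({j. X j \<omega> \<le> x} \<inter> set [1..<N+1])" by (rule distinct_length_filter) simp
  also have "{j. X j \<omega> \<le> x} \<inter> set [1..<N+1] = {j\<in>{1..N}. X j \<omega> \<le> x}" by auto
  finally show ?thesis .
qed

lemma order_stat_le_iff:
  assumes "1 \<le> k" "k \<le> N"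
  shows "order_stat X N k \<omega> \<le> x \<longleftrightarrow> k \<le> card {j\<in>{1..N}. X j \<omega> \<le> x}"
proof -
  have "length (map (\<lambda>j. X j \<omega>) [1..<N+1]) = N" by simp
  then show ?thesis
  unfolding order_stat_def using sorted_nth_le_iff[of k "map (\<lambda>j. X j \<omega>) [1..<N+1]" x] assms
  by (simp only: count_map_upt)
qed

lemma card_sum_ind:
  "real (card {j\<in>A. P j}) = (\<Sum>j\<in>A. if P j then 1 else 0)" if "finite A"
  using that by (simp add: sum.If_cases Int_def conj_commute)

lemma list_ident:
  fixes ys :: "real list"
  assumes s: "sorted ys" and l: "length ys = N" and km: "1 \<le> k" "k < m" "m \<le> N"
  shows "(\<Sum>i<N. winsor (ys!(k-1)) (ys!(m-1)) (ys!i) ^ r) =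
     real k * (ys!(k-1))^r + (\<Sum>i\<in>{k+1..m-1}. (ys!(i-1))^r) + real (N-m+1) * (ys!(m-1))^r"
proof -
  define c where "c = ys!(k-1)"
  define d where "d = ys!(m-1)"
  have cd: "c \<le> d" unfolding c_def d_def using s l km by (intro sorted_nth_mono) auto
  have "(\<Sum>i<N. winsor c d (ys!i) ^ r) = (\<Sum>i\<in>{..<k}. winsor c d (ys!i) ^ r)
      + (\<Sum>i\<in>{k..<m-1}. winsor c d (ys!i) ^ r) + (\<Sum>i\<in>{m-1..<N}. winsor c d (ys!i) ^ r)"
    unfolding lessThan_atLeast0 using km
    by (simp add: sum.atLeastLessThan_concat)
  also have "(\<Sum>i\<in>{..<k}. winsor c d (ys!i) ^ r) = (\<Sum>i\<in>{..<k}. c ^ r)"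
  proof (rule sum.cong)
    fix i assume "i \<in> {..<k}"
    then have "ys!i \<le> c" unfolding c_def using s l km by (intro sorted_nth_mono) auto
    then show "winsor c d (ys!i) ^ r = c ^ r" by (simp add: winsor_def)
  qed simp
  also have "(\<Sum>i\<in>{k..<m-1}. winsor c d (ys!i) ^ r) = (\<Sum>i\<in>{k..<m-1}. (ys!i) ^ r)"
  proof (rule sum.cong)
    fix i assume i: "i \<in> {k..<m-1}"
    then have "c \<le> ys!i" unfolding c_def using s l km by (intro sorted_nth_mono) auto
    moreover have "ys!i \<le> d" unfolding d_def using i s l km by (intro sorted_nth_mono) auto
    ultimately show "winsor c d (ys!i) ^ r = (ys!i) ^ r" by (simp add: winsor_def)
  qed simp
  also have "(\<Sum>i\<in>{m-1..<N}. winsor c d (ys!i) ^ r) = (\<Sum>i\<in>{m-1..<N}. d ^ r)"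
  proof (rule sum.cong)
    fix i assume i: "i \<in> {m-1..<N}"
    then have "d \<le> ys!i" unfolding d_def using s l km by (intro sorted_nth_mono) auto
    then show "winsor c d (ys!i) ^ r = d ^ r" using cd by (simp add: winsor_def)
  qed simp
  also have "(\<Sum>i\<in>{k..<m-1}. (ys!i) ^ r) = (\<Sum>i\<in>{k+1..m-1}. (ys!(i-1))^r)"
  proof -
    have e1: "{k..<m-1} = {k..m-2}" using km by auto
    have e2: "{k+1..m-1} = {Suc k..Suc (m-2)}" using km by auto
    have "(\<Sum>i\<in>{Suc k..Suc (m-2)}. (ys!(i-1))^r) = (\<Sum>i\<in>{k..m-2}. (ys!(Suc i-1))^r)"
      by (rule sum.shift_bounds_cl_Suc_ivl)
    then show ?thesis unfolding e1 e2 by simp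
  qed
  finally show ?thesis using km by (simp add: c_def d_def of_nat_diff)
qed

lemma est_identity:
  assumes "1 \<le> nat \<lfloor>\<alpha> * real N\<rfloor> + 1" "nat \<lfloor>\<alpha> * real N\<rfloor> + 1 < nat \<lfloor>\<beta> * real N\<rfloor>" "nat \<lfloor>\<beta> * real N\<rfloor> \<le> N"
  shows "winsor_moment_est X \<alpha> \<beta> r N \<omega> = 1 / real N * (\<Sum>j\<in>{1..N}.
     winsor (order_stat X N (nat \<lfloor>\<alpha> * real N\<rfloor> + 1) \<omega>) (order_stat X N (nat \<lfloor>\<beta> * real N\<rfloor>) \<omega>) (X j \<omega>) ^ r)"
proof -
  define k where "k = nat \<lfloor>\<alpha> * real N\<rfloor> + 1"
  define m where "m = nat \<lfloor>\<beta> * real N\<rfloor>"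
  define xs where "xs = map (\<lambda>j. X j \<omega>) [1..<N+1]"
  define ys where "ys = sort xs"
  have km: "1 \<le> k" "k < m" "m \<le> N" using assms by (auto simp: k_def m_def)
  have os: "order_stat X N i \<omega> = ys ! (i-1)" for i by (simp add: order_stat_def ys_def xs_def)
  have lenN: "length ys = N" by (simp add: ys_def xs_def)
  define g where "g = (\<lambda>v. winsor (ys!(k-1)) (ys!(m-1)) v ^ r)"
  have "(\<Sum>j\<in>{1..N}. g (X j \<omega>)) = sum_list (map g xs)"
    unfolding xs_def map_map o_def
    by (subst interv_sum_list_conv_sum_set_nat) (auto intro: sum.cong)
  also have "\<dots> = sum_list (map g ys)" unfolding ys_def
    by (metis mset_map mset_sort sum_mset_sum_list)
  also have "sum_list (map g ys) = (\<Sum>i<N. g (ys!i))" 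
    by (simp add: sum_list_sum_nth atLeast0LessThan lenN)
  also have "\<dots> = real k * (ys!(k-1))^r + (\<Sum>i\<in>{k+1..m-1}. (ys!(i-1))^r) + real (N-m+1) * (ys!(m-1))^r"
    unfolding g_def by (rule list_ident) (use km in \<open>auto simp: ys_def xs_def\<close>)
  finally have e: "(\<Sum>j\<in>{1..N}. g (X j \<omega>)) = \<dots>" .
  have "N > 0" using km by auto
  show ?thesis
    unfolding winsor_moment_est_def Let_def k_def[symmetric] m_def[symmetric] os
    using e \<open>N > 0\<close> unfolding g_def by (simp add: field_simps)
qed

lemma winsor_lip:
  assumes "a \<le> b" "c \<le> d"
  shows "\<bar>winsor c d x - winsor a b x\<bar> \<le> max \<bar>c - a\<bar> \<bar>d - b\<bar>"
  using assms unfolding winsor_def by (auto simp: abs_if max_def)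

lemma winsor_bound:
  assumes "a \<le> b" shows "\<bar>winsor a b x\<bar> \<le> max \<bar>a\<bar> \<bar>b\<bar>"
  using assms unfolding winsor_def by (auto simp: abs_if max_def)

lemma pow_lip:
  fixes x y B :: real
  assumes "\<bar>x\<bar> \<le> B" "\<bar>y\<bar> \<le> B"
  shows "\<bar>x^r - y^r\<bar> \<le> real r * B^(r-1) * \<bar>x - y\<bar>"
proof -
  have B0: "0 \<le> B" using assms by linarith
  have "\<bar>(\<Sum>i<r. y ^ (r - Suc i) * x ^ i)\<bar> \<le> (\<Sum>i<r. \<bar>y ^ (r - Suc i) * x ^ i\<bar>)"
    by (rule sum_abs)
  also have "\<dots> \<le> (\<Sum>i<r. B^(r-1))"
  proof (rule sum_mono)
    fix i assume i: "i \<in> {..<r}"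
    have "\<bar>y ^ (r - Suc i) * x ^ i\<bar> = \<bar>y\<bar> ^ (r - Suc i) * \<bar>x\<bar> ^ i" by (simp add: abs_mult power_abs)
    also have "\<dots> \<le> B ^ (r - Suc i) * B ^ i"
      by (intro mult_mono power_mono assms) (auto simp: B0)
    also have "\<dots> = B^(r-1)" using i by (simp add: power_add[symmetric])
    finally show "\<bar>y ^ (r - Suc i) * x ^ i\<bar> \<le> B^(r-1)" .
  qed
  finally have S: "\<bar>(\<Sum>i<r. y ^ (r - Suc i) * x ^ i)\<bar> \<le> real r * B^(r-1)" by simp
  have "\<bar>x^r - y^r\<bar> = \<bar>x - y\<bar> * \<bar>(\<Sum>i<r. y ^ (r - Suc i) * x ^ i)\<bar>"
    by (simp add: power_diff_sumr2 abs_mult)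
  also have "\<dots> \<le> \<bar>x - y\<bar> * (real r * B^(r-1))" by (intro mult_left_mono S) auto
  finally show ?thesis by (simp add: mult_ac)
qed

lemma quantile_deriv:
  fixes F :: "real \<Rightarrow> real"
  assumes mono: "\<And>x y. x \<le> y \<Longrightarrow> F x \<le> F y"
    and ex1: "\<exists>x. F x \<ge> u" and ex2: "\<exists>x. F x < u"
    and der: "(F has_real_derivative fa) (at q)" and q: "q = quantile F u" and fa: "fa > 0"
  shows "\<exists>\<delta>>0. \<forall>t. 0 < t \<and> t < \<delta> \<longrightarrow> F (q + t) \<ge> u + fa * t / 2 \<and> F (q - t) \<le> u - fa * t / 2"
proof -
  define S where "S = {x. F x \<ge> u}"
  have Sne: "S \<noteq> {}" using ex1 by (auto simp: S_def)
  obtain x0 where x0: "F x0 < u" using ex2 by auto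
  have bdd: "bdd_below S"
  proof
    fix y assume "y \<in> S"
    then show "x0 \<le> y" using mono[of y x0] x0 by (force simp: S_def)
  qed
  have qS: "q = Inf S" by (simp add: q quantile_def S_def)
  have "((\<lambda>y. (F y - F q) / (y - q)) \<longlongrightarrow> fa) (at q)"
    using der by (simp add: has_field_derivative_iff)
  then have "eventually (\<lambda>y. dist ((F y - F q) / (y - q)) fa < fa/2) (at q)"
    using fa by (intro tendstoD) auto
  then obtain d0 where d0: "d0 > 0" and
    hd: "\<And>y. y \<noteq> q \<Longrightarrow> dist y q < d0 \<Longrightarrow> \<bar>(F y - F q) / (y - q) - fa\<bar> < fa/2"
    unfolding eventually_at by (auto simp: dist_real_def)
  have up: "F q + fa*h/2 \<le> F (q+h) \<and> F (q+h) \<le> F q + 3*fa*h/2" if "0 < h" "h < d0" for h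
  proof -
    have "\<bar>(F (q+h) - F q) / h - fa\<bar> < fa/2" using hd[of "q+h"] that by (auto simp: dist_real_def)
    then have "\<bar>(F (q+h) - F q) - fa * h\<bar> < fa/2 * h" using that
      by (simp add: abs_less_iff field_simps)
    then show ?thesis by (simp only: abs_less_iff) linarith
  qed
  have dn: "F q - 3*fa*h/2 \<le> F (q-h) \<and> F (q-h) \<le> F q - fa*h/2" if "0 < h" "h < d0" for h
  proof -
    have "\<bar>(F (q-h) - F q) / (-h) - fa\<bar> < fa/2" using hd[of "q-h"] that by (auto simp: dist_real_def)
    moreover have "(F (q-h) - F q) / (-h) = (F q - F (q-h)) / h" by (simp add: minus_divide_left)
    ultimately have "\<bar>(F q - F (q-h)) / h - fa\<bar> < fa/2" by simp
    then have "\<bar>(F q - F (q-h)) - fa * h\<bar> < fa/2 * h" using that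
      by (simp add: abs_less_iff field_simps)
    then show ?thesis by (simp only: abs_less_iff) linarith
  qed
  have Fq1: "F q \<ge> u"
  proof (rule ccontr)
    assume "\<not> ?thesis"
    then have lt: "F q < u" by simp
    define h where "h = min (d0/2) ((u - F q) / (2*fa))"
    have h: "0 < h" "h < d0" using d0 lt fa by (auto simp: h_def)
    have "h \<le> (u - F q) / (2*fa)" by (simp add: h_def)
    then have "3*fa*h/2 < u - F q" using fa lt h by (simp add: field_simps)
    then have "F (q+h) < u" using up[OF h] by linarith
    moreover have "Inf S < q + h" using qS h by simp
    then obtain x where "x \<in> S" "x < q + h" using cInf_less_iff[OF Sne bdd] by auto
    then have "F (q+h) \<ge> u" using mono[of x "q+h"] by (auto simp: S_def)
    ultimately show False by simp
  qed
  have Fq2: "F q \<le> u"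
  proof (rule ccontr)
    assume "\<not> ?thesis"
    then have lt: "F q > u" by simp
    define h where "h = min (d0/2) ((F q - u) / (2*fa))"
    have h: "0 < h" "h < d0" using d0 lt fa by (auto simp: h_def)
    have "h \<le> (F q - u) / (2*fa)" by (simp add: h_def)
    then have "3*fa*h/2 < F q - u" using fa lt h by (simp add: field_simps)
    then have "F (q-h) > u" using dn[OF h] by linarith
    then have "q - h \<in> S" by (simp add: S_def)
    then have "Inf S \<le> q - h" using bdd by (rule cInf_lower)
    then show False using qS h by simp
  qed
  show ?thesis using up dn Fq1 Fq2 d0 by (intro exI[of _ d0]) force
qed

lemma hoeff:
  fixes X :: "nat \<Rightarrow> 'a \<Rightarrow> real" and g :: "real \<Rightarrow> real"
  assumes P: "prob_space M" and ind: "prob_space.indep_vars M (\<lambda>_. borel) X {1..}"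
    and gm: "g \<in> borel_measurable borel" and gb: "\<And>x. lo \<le> g x \<and> g x \<le> hi" and lohi: "lo < hi"
    and N: "N > 0" and eps: "\<epsilon> \<ge> 0"
    and ex: "\<And>j. j \<ge> 1 \<Longrightarrow> prob_space.expectation M (\<lambda>\<omega>. g (X j \<omega>)) = e"
  shows "measure M {\<omega>\<in>space M. (\<Sum>j\<in>{1..N}. g (X j \<omega>)) \<ge> real N * e + \<epsilon>}
           \<le> exp (-2 * \<epsilon>\<^sup>2 / (real N * (hi - lo)\<^sup>2))"
    and "measure M {\<omega>\<in>space M. (\<Sum>j\<in>{1..N}. g (X j \<omega>)) \<le> real N * e - \<epsilon>}
           \<le> exp (-2 * \<epsilon>\<^sup>2 / (real N * (hi - lo)\<^sup>2))"
proof -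
  interpret prob_space M by (rule P)
  have ind': "indep_vars (\<lambda>_. borel) X {1..N}"
    using ind by (rule indep_vars_subset) auto
  have ind2: "indep_vars (\<lambda>_. borel) (\<lambda>j \<omega>. g (X j \<omega>)) {1..N}"
    by (rule indep_vars_compose2[OF ind']) (use gm in auto)
  have mu: "(\<Sum>j\<in>{1..N}. expectation (\<lambda>\<omega>. g (X j \<omega>))) = real N * e"
    using ex by simp
  interpret H: Hoeffding_ineq M "{1..N}" "\<lambda>j \<omega>. g (X j \<omega>)" "\<lambda>_. lo" "\<lambda>_. hi" "real N * e"
    by unfold_locales (use ind2 gb mu in auto)
  have pos: "(\<Sum>i\<in>{1..N}. (hi - lo)\<^sup>2) > 0" using N lohi by simp
  have s: "(\<Sum>i\<in>{1..N}. (hi - lo)\<^sup>2) = real N * (hi - lo)\<^sup>2" by simp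
  show "measure M {\<omega>\<in>space M. (\<Sum>j\<in>{1..N}. g (X j \<omega>)) \<ge> real N * e + \<epsilon>}
           \<le> exp (-2 * \<epsilon>\<^sup>2 / (real N * (hi - lo)\<^sup>2))"
    using H.Hoeffding_ineq_ge[OF eps pos] unfolding s .
  show "measure M {\<omega>\<in>space M. (\<Sum>j\<in>{1..N}. g (X j \<omega>)) \<le> real N * e - \<epsilon>}
           \<le> exp (-2 * \<epsilon>\<^sup>2 / (real N * (hi - lo)\<^sup>2))"
    using H.Hoeffding_ineq_le[OF eps pos] unfolding s .
qed

lemma distr_same:
  fixes X :: "nat \<Rightarrow> 'a \<Rightarrow> real"
  assumes P: "prob_space M" and ind: "prob_space.indep_vars M (\<lambda>_. borel) X {1..}"
    and distr: "\<And>i x. i \<ge> 1 \<Longrightarrow> measure M {\<omega> \<in> space M. X i \<omega> \<le> x} = F x"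
    and j: "j \<ge> 1"
  shows "distr M borel (X j) = distr M borel (X 1)"
    and "F = cdf (distr M borel (X 1))"
    and "X j \<in> borel_measurable M"
proof -
  interpret prob_space M by (rule P)
  have rv: "X i \<in> borel_measurable M" if "i \<ge> 1" for i
    using ind that unfolding indep_vars_def by auto
  show "X j \<in> borel_measurable M" using rv j .
  have c: "cdf (distr M borel (X i)) = F" if "i \<ge> 1" for i
  proof
    fix x
    have "cdf (distr M borel (X i)) x = measure M (X i -` {..x} \<inter> space M)"
      unfolding cdf_def using rv[OF that] by (subst measure_distr) auto
    also have "X i -` {..x} \<inter> space M = {\<omega> \<in> space M. X i \<omega> \<le> x}" by auto
    finally show "cdf (distr M borel (X i)) x = F x" using distr[OF that] by simp
  qed
  show "F = cdf (distr M borel (X 1))" using c[of 1] by simp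
  show "distr M borel (X j) = distr M borel (X 1)"
    by (rule cdf_unique) (use rv j c in auto)
qed

lemma exp_same:
  fixes X :: "nat \<Rightarrow> 'a \<Rightarrow> real" and h :: "real \<Rightarrow> real"
  assumes P: "prob_space M" and ind: "prob_space.indep_vars M (\<lambda>_. borel) X {1..}"
    and distr: "\<And>i x. i \<ge> 1 \<Longrightarrow> measure M {\<omega> \<in> space M. X i \<omega> \<le> x} = F x"
    and j: "j \<ge> 1" and hm: "h \<in> borel_measurable borel"
  shows "prob_space.expectation M (\<lambda>\<omega>. h (X j \<omega>)) = prob_space.expectation M (\<lambda>\<omega>. h (X 1 \<omega>))"
proof -
  interpret prob_space M by (rule P)
  have m: "X i \<in> borel_measurable M" if "i \<ge> 1" for i using distr_same[OF P ind distr that] by auto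
  have "expectation (\<lambda>\<omega>. h (X j \<omega>)) = integral\<^sup>L (distr M borel (X j)) h"
    by (rule integral_distr[symmetric]) (use m[OF j] hm in auto)
  also have "\<dots> = integral\<^sup>L (distr M borel (X 1)) h" using distr_same[OF P ind distr j] by simp
  also have "\<dots> = expectation (\<lambda>\<omega>. h (X 1 \<omega>))"
    by (rule integral_distr) (use m[of 1] hm in auto)
  finally show ?thesis .
qed

lemma exp_ind:
  fixes X :: "nat \<Rightarrow> 'a \<Rightarrow> real"
  assumes P: "prob_space M" and ind: "prob_space.indep_vars M (\<lambda>_. borel) X {1..}"
    and distr: "\<And>i x. i \<ge> 1 \<Longrightarrow> measure M {\<omega> \<in> space M. X i \<omega> \<le> x} = F x"
    and j: "j \<ge> 1"
  shows "prob_space.expectation M (\<lambda>\<omega>. if X j \<omega> \<le> x then 1 else 0::real) = F x"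
proof -
  interpret prob_space M by (rule P)
  have e: "(\<lambda>\<omega>. if X j \<omega> \<le> x then 1 else 0::real) = indicator {\<omega>. X j \<omega> \<le> x}"
    by (auto simp: indicator_def fun_eq_iff)
  have "{\<omega>. X j \<omega> \<le> x} \<inter> space M = {\<omega> \<in> space M. X j \<omega> \<le> x}" by auto
  then show ?thesis unfolding e using distr[OF j] by simp
qed

lemma meas_le:
  assumes [measurable]: "f \<in> borel_measurable M"
  shows "{\<omega>\<in>space M. f \<omega> \<le> (c::real)} \<in> sets M" "{\<omega>\<in>space M. f \<omega> \<ge> (c::real)} \<in> sets M"
  by measurable

lemma meas_sum:
  fixes X :: "nat \<Rightarrow> 'a \<Rightarrow> real" and g :: "real \<Rightarrow> real"
  assumes "\<And>j. j \<ge> 1 \<Longrightarrow> X j \<in> borel_measurable M" "g \<in> borel_measurable borel"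
  shows "(\<lambda>\<omega>. \<Sum>j\<in>{1..N}. g (X j \<omega>)) \<in> borel_measurable M"
  by (rule borel_measurable_sum) (use assms in auto)

lemma asy1: "((\<lambda>N::nat. sqrt (ln (real N) / real N)) \<longlongrightarrow> 0) sequentially"
  by real_asymp

lemma asy2: "filterlim (\<lambda>N::nat. real N * sqrt (ln (real N) / real N)) at_top sequentially"
  by real_asymp

lemma exp_powr_bound:
  assumes "N > (0::real)" "ln N \<ge> 0" "q \<ge> c"
  shows "exp (- (q * ln N)) \<le> N powr (- c)"
proof -
  have "N powr (-c) = exp (- c * ln N)" using assms by (simp add: powr_def)
  moreover have "- (q * ln N) \<le> - c * ln N" using assms by (simp add: mult_right_mono)
  ultimately show ?thesis by simp
qed

lemma floor_facts:
  assumes "0 \<le> x"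
  shows "real (nat \<lfloor>x\<rfloor>) \<le> x" "real (nat \<lfloor>x\<rfloor>) > x - 1"
  using assms by (auto simp: of_nat_nat)

theorem lemma6p2:
  fixes M :: "'a measure" and X :: "nat \<Rightarrow> 'a \<Rightarrow> real"
    and F f :: "real \<Rightarrow> real" and \<alpha> \<beta> :: real and r :: nat
  assumes "prob_space M"
    and indep: "prob_space.indep_vars M (\<lambda>_. borel) X {1..}"
    and distr: "\<And>i x. i \<ge> 1 \<Longrightarrow> measure M {\<omega> \<in> space M. X i \<omega> \<le> x} = F x"
    and "0 < \<alpha>" "\<alpha> < \<beta>" "\<beta> < 1"
    and nbhd: "\<And>\<xi>. \<xi> \<in> {quantile F \<alpha>, quantile F \<beta>} \<Longrightarrow>
       \<exists>\<delta>>0. \<exists>L. (\<forall>x\<in>ball \<xi> \<delta>. (F has_real_derivative f x) (at x)) \<and>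
              (\<forall>x\<in>ball \<xi> \<delta>. \<forall>y\<in>ball \<xi> \<delta>. \<bar>f x - f y\<bar> \<le> L * \<bar>x - y\<bar>)"
    and "f (quantile F \<alpha>) > 0" "f (quantile F \<beta>) > 0"
    and "r > 0"
  shows "\<forall>c>0. \<exists>A>0.
    (\<lambda>N. measure M {\<omega> \<in> space M.
        \<bar>winsor_moment_est X \<alpha> \<beta> r N \<omega>
         - prob_space.expectation M (\<lambda>\<omega>. winsor (quantile F \<alpha>) (quantile F \<beta>) (X 1 \<omega>) ^ r)\<bar>
        > A * sqrt (ln (real N) / real N)})
    \<in> O(\<lambda>N. real N powr (- c))"
proof -
  note P = assms(1)
  interpret prob_space M by (rule P)
  note al = assms(4,5,6)
  define a where "a = quantile F \<alpha>"
  define b where "b = quantile F \<beta>"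
  have fa: "f a > 0" "f b > 0" using assms(8,9) by (auto simp: a_def b_def)
  have Xm: "\<And>j. j \<ge> 1 \<Longrightarrow> X j \<in> borel_measurable M" using distr_same[OF P indep distr] by blast
  have Fc: "F = cdf (distr M borel (X 1))" using distr_same[OF P indep distr, of 1] by blast
  interpret RD: real_distribution "distr M borel (X 1)" using Xm[of 1] by simp
  have mono: "\<And>x y. x \<le> y \<Longrightarrow> F x \<le> F y" unfolding Fc by (rule RD.cdf_nondecreasing)
  have ex1: "\<exists>x. F x \<ge> u" if "u < 1" for u
  proof -
    have "eventually (\<lambda>x. F x > u) at_top"
      using RD.cdf_lim_at_top_prob that unfolding Fc by (rule order_tendstoD(1))
    then obtain x0 where "\<And>x. x \<ge> x0 \<Longrightarrow> F x > u" unfolding eventually_at_top_linorder by auto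
    then show ?thesis by (meson less_imp_le order_refl)
  qed
  have ex2: "\<exists>x. F x < u" if "u > 0" for u
  proof -
    have "eventually (\<lambda>x. F x < u) at_bot"
      using RD.cdf_lim_at_bot that unfolding Fc by (rule order_tendstoD(2))
    then obtain x0 where "\<And>x. x \<le> x0 \<Longrightarrow> F x < u" unfolding eventually_at_bot_linorder by auto
    then show ?thesis by blast
  qed
  have der: "(F has_real_derivative f q) (at q)" if "q \<in> {a, b}" for q
  proof -
    have "q \<in> {quantile F \<alpha>, quantile F \<beta>}" using that by (simp add: a_def b_def)
    from nbhd[OF this] obtain \<delta> where "\<delta> > 0" "\<forall>x\<in>ball q \<delta>. (F has_real_derivative f x) (at x)"
      by blast
    then show ?thesis by auto
  qed
  obtain \<delta>a where \<delta>a: "\<delta>a > 0" "\<And>t. 0 < t \<and> t < \<delta>a \<Longrightarrow> F (a + t) \<ge> \<alpha> + f a * t / 2 \<and> F (a - t) \<le> \<alpha> - f a * t / 2"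
    using quantile_deriv[OF mono ex1 ex2 der a_def fa(1)] al by auto
  obtain \<delta>b where \<delta>b: "\<delta>b > 0" "\<And>t. 0 < t \<and> t < \<delta>b \<Longrightarrow> F (b + t) \<ge> \<beta> + f b * t / 2 \<and> F (b - t) \<le> \<beta> - f b * t / 2"
    using quantile_deriv[OF mono ex1 ex2 der b_def fa(2)] al by auto
  define \<delta> where "\<delta> = min \<delta>a \<delta>b"
  define fm where "fm = min (f a) (f b)"
  have fm: "fm > 0" "fm \<le> f a" "fm \<le> f b" using fa by (auto simp: fm_def)
  have \<delta>: "\<delta> > 0" using \<delta>a \<delta>b by (simp add: \<delta>_def)
  have Qa: "F (a + t) \<ge> \<alpha> + fm * t / 2 \<and> F (a - t) \<le> \<alpha> - fm * t / 2" if "0 < t" "t < \<delta>" for t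
  proof -
    have "F (a + t) \<ge> \<alpha> + f a * t / 2 \<and> F (a - t) \<le> \<alpha> - f a * t / 2" using \<delta>a that by (auto simp: \<delta>_def)
    moreover have "fm * t \<le> f a * t" using fm that by (intro mult_right_mono) auto
    ultimately show ?thesis by linarith
  qed
  have Qb: "F (b + t) \<ge> \<beta> + fm * t / 2 \<and> F (b - t) \<le> \<beta> - fm * t / 2" if "0 < t" "t < \<delta>" for t
  proof -
    have "F (b + t) \<ge> \<beta> + f b * t / 2 \<and> F (b - t) \<le> \<beta> - f b * t / 2" using \<delta>b that by (auto simp: \<delta>_def)
    moreover have "fm * t \<le> f b * t" using fm that by (intro mult_right_mono) auto
    ultimately show ?thesis by linarith
  qed
  have ab: "a \<le> b"
  proof (rule ccontr)
    assume "\<not> a \<le> b"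
    define t where "t = min (\<delta>/2) ((a - b)/2)"
    have t: "0 < t" "t < \<delta>" "b + t \<le> a - t" using \<delta> \<open>\<not> a \<le> b\<close> unfolding t_def by (auto simp: min_def field_simps)
    have "F (b + t) \<le> F (a - t)" using mono t by blast
    moreover have "fm * t > 0" using fm t by simp
    ultimately show False using Qa[OF t(1,2)] Qb[OF t(1,2)] al by linarith
  qed
  define B where "B = max \<bar>a\<bar> \<bar>b\<bar> + 1"
  have B1: "B \<ge> 1" by (simp add: B_def)
  define K where "K = real r * B^(r-1)"
  have K0: "K \<ge> 0" using B1 by (simp add: K_def)
  define g0 where "g0 = (\<lambda>v. winsor a b v ^ r)"
  have g0m: "g0 \<in> borel_measurable borel" unfolding g0_def winsor_def by measurable
  have g0b: "- (B^r) \<le> g0 v \<and> g0 v \<le> B^r" for v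
  proof -
    have "\<bar>winsor a b v\<bar> \<le> B" using winsor_bound[OF ab, of v] by (simp add: B_def)
    then have "\<bar>winsor a b v\<bar> ^ r \<le> B ^ r" by (intro power_mono) auto
    then have "\<bar>g0 v\<bar> \<le> B^r" by (simp add: g0_def power_abs)
    then show ?thesis by linarith
  qed
  define \<mu> where "\<mu> = expectation (\<lambda>\<omega>. g0 (X 1 \<omega>))"
  have e\<mu>: "expectation (\<lambda>\<omega>. g0 (X j \<omega>)) = \<mu>" if "j \<ge> 1" for j
    unfolding \<mu>_def by (rule exp_same[OF P indep distr that g0m])
  define D where "D = 2 * B^r"
  have D: "D > 0" using B1 by (simp add: D_def)
  show ?thesis
  proof (intro allI impI)
    fix c :: real assume c: "c > 0"
    define C where "C = sqrt (8*c/fm\<^sup>2 + c*D\<^sup>2)"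
    have C2: "C\<^sup>2 = 8*c/fm\<^sup>2 + c*D\<^sup>2" unfolding C_def using c fm by (intro real_sqrt_pow2) auto
    have "8*c/fm\<^sup>2 > 0" "c*D\<^sup>2 > 0" using c fm(1) D by auto
    then have C0: "C > 0" unfolding C_def by simp
    define A where "A = (K+1)*C + 1"
    have A0: "A > 0" using K0 C0 by (simp add: A_def add_pos_nonneg)
    define s where "s = (\<lambda>N::nat. sqrt (ln (real N) / real N))"
    have \<mu>_eq: "expectation (\<lambda>\<omega>. winsor (quantile F \<alpha>) (quantile F \<beta>) (X 1 \<omega>) ^ r) = \<mu>"
      by (simp add: \<mu>_def g0_def a_def b_def)
    have key: "measure M {\<omega> \<in> space M. \<bar>winsor_moment_est X \<alpha> \<beta> r N \<omega> - \<mu>\<bar> > A * s N}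
                 \<le> 6 * real N powr (- c)"
      if N2: "N \<ge> 2" and km: "nat \<lfloor>\<alpha> * real N\<rfloor> + 1 < nat \<lfloor>\<beta> * real N\<rfloor>"
        and t\<delta>: "C * s N < \<delta>" and t1: "C * s N \<le> 1" and e1: "real N * (C * s N) * fm / 4 \<ge> 1" for N
    proof -
      define t where "t = C * s N"
      define k where "k = nat \<lfloor>\<alpha> * real N\<rfloor> + 1"
      define m where "m = nat \<lfloor>\<beta> * real N\<rfloor>"
      define e where "e = real N * t * fm / 4"
      have Npos: "real N > 0" and NN: "N > 0" using N2 by auto
      have lnN: "ln (real N) > 0" using N2 by (intro ln_gt_zero) auto
      have q0: "ln (real N) / real N > 0" using lnN Npos by simp
      have s0: "s N > 0" unfolding s_def using q0 by simp
      have s2: "(s N)\<^sup>2 = ln (real N) / real N" unfolding s_def using q0 by (intro real_sqrt_pow2) auto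
      have t0: "t > 0" using C0 s0 by (simp add: t_def)
      have Nt2: "real N * t\<^sup>2 = C\<^sup>2 * ln (real N)"
        using Npos by (simp add: t_def power_mult_distrib s2)
      have e1': "e \<ge> 1" using e1 by (simp add: e_def t_def)
      have aN: "0 \<le> \<alpha> * real N" "0 \<le> \<beta> * real N" using al Npos by auto
      have kk: "real k = real (nat \<lfloor>\<alpha> * real N\<rfloor>) + 1" by (simp only: k_def of_nat_add of_nat_1)
      have kf: "real k \<le> \<alpha> * real N + 1" "real k > \<alpha> * real N"
        using floor_facts[OF aN(1)] unfolding kk by linarith+
      have mf: "real m \<le> \<beta> * real N" "real m > \<beta> * real N - 1"
        using floor_facts[OF aN(2)] unfolding m_def by linarith+
      have kmN: "1 \<le> k" "k < m" "m \<le> N"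
      proof -
        show "1 \<le> k" by (simp add: k_def)
        show "k < m" using km by (simp add: k_def m_def)
        have "real m \<le> real N" using mf al Npos by (smt (verit) mult_le_cancel_right1)
        then show "m \<le> N" by simp
      qed
      define h where "h = (\<lambda>x v::real. if v \<le> x then 1 else (0::real))"
      have hm: "h x \<in> borel_measurable borel" for x unfolding h_def by measurable
      have hb: "0 \<le> h x v \<and> h x v \<le> 1" for x v by (simp add: h_def)
      have eh: "expectation (\<lambda>\<omega>. h x (X j \<omega>)) = F x" if "j \<ge> 1" for x j
        unfolding h_def by (rule exp_ind[OF P indep distr that])
      define cnt where "cnt = (\<lambda>x \<omega>. \<Sum>j\<in>{1..N}. h x (X j \<omega>))"
      have cnt_card: "cnt x \<omega> = real (card {j\<in>{1..N}. X j \<omega> \<le> x})" for x \<omega>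
        unfolding cnt_def h_def by (rule card_sum_ind[symmetric]) simp
      define Sg where "Sg = (\<lambda>\<omega>. \<Sum>j\<in>{1..N}. g0 (X j \<omega>))"
      have Sgm: "Sg \<in> borel_measurable M" unfolding Sg_def by (rule meas_sum[OF Xm g0m])
      have cntm: "cnt x \<in> borel_measurable M" for x unfolding cnt_def by (rule meas_sum[OF Xm hm])
      define E1 where "E1 = {\<omega>\<in>space M. Sg \<omega> \<ge> real N * \<mu> + real N * t}"
      define E1' where "E1' = {\<omega>\<in>space M. Sg \<omega> \<le> real N * \<mu> - real N * t}"
      define E2 where "E2 = {\<omega>\<in>space M. cnt (a+t) \<omega> \<le> real N * F (a+t) - e}"
      define E3 where "E3 = {\<omega>\<in>space M. cnt (a-t) \<omega> \<ge> real N * F (a-t) + e}"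
      define E4 where "E4 = {\<omega>\<in>space M. cnt (b+t) \<omega> \<le> real N * F (b+t) - e}"
      define E5 where "E5 = {\<omega>\<in>space M. cnt (b-t) \<omega> \<ge> real N * F (b-t) + e}"
      have Es: "E1 \<in> sets M" "E1' \<in> sets M" "E2 \<in> sets M" "E3 \<in> sets M" "E4 \<in> sets M" "E5 \<in> sets M"
        unfolding E1_def E1'_def E2_def E3_def E4_def E5_def
        by (intro meas_le Sgm cntm)+
      have lohi: "- (B^r) < B^r" using B1 by (smt (verit) one_le_power)
      have Dq: "(B^r - - (B^r))\<^sup>2 = D\<^sup>2" by (simp add: D_def)
      have q1: "2 * C\<^sup>2 / D\<^sup>2 \<ge> c"
      proof -
        have "C\<^sup>2 \<ge> c * D\<^sup>2" using C2 c fm by (simp add: add_increasing)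
        then have "C\<^sup>2 / D\<^sup>2 \<ge> c" using D by (simp add: field_simps)
        then show ?thesis using c by simp
      qed
      have q2: "C\<^sup>2 * fm\<^sup>2 / 8 \<ge> c"
      proof -
        have "C\<^sup>2 \<ge> 8 * c / fm\<^sup>2" using C2 c D by simp
        then have "C\<^sup>2 * fm\<^sup>2 \<ge> 8 * c" using fm by (simp add: field_simps)
        then show ?thesis by simp
      qed
      have pb1: "measure M E1 \<le> real N powr (- c)"
      proof -
        have "measure M E1 \<le> exp (-2 * (real N * t)\<^sup>2 / (real N * (B^r - - (B^r))\<^sup>2))"
          unfolding E1_def Sg_def
          by (rule hoeff(1)[OF P indep g0m g0b lohi NN _ e\<mu>]) (use Npos t0 in auto)
        also have "-2 * (real N * t)\<^sup>2 / (real N * (B^r - - (B^r))\<^sup>2) = - ((2 * C\<^sup>2 / D\<^sup>2) * ln (real N))"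
          unfolding Dq using Npos D Nt2 by (simp add: power_mult_distrib field_simps power2_eq_square)
        also have "exp \<dots> \<le> real N powr (- c)" by (rule exp_powr_bound) (use Npos lnN q1 in auto)
        finally show ?thesis .
      qed
      have pb1': "measure M E1' \<le> real N powr (- c)"
      proof -
        have "measure M E1' \<le> exp (-2 * (real N * t)\<^sup>2 / (real N * (B^r - - (B^r))\<^sup>2))"
          unfolding E1'_def Sg_def
          by (rule hoeff(2)[OF P indep g0m g0b lohi NN _ e\<mu>]) (use Npos t0 in auto)
        also have "-2 * (real N * t)\<^sup>2 / (real N * (B^r - - (B^r))\<^sup>2) = - ((2 * C\<^sup>2 / D\<^sup>2) * ln (real N))"
          unfolding Dq using Npos D Nt2 by (simp add: power_mult_distrib field_simps power2_eq_square)
        also have "exp \<dots> \<le> real N powr (- c)" by (rule exp_powr_bound) (use Npos lnN q1 in auto)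
        finally show ?thesis .
      qed
      have ee: "-2 * e\<^sup>2 / (real N * (1 - 0)\<^sup>2) = - ((C\<^sup>2 * fm\<^sup>2 / 8) * ln (real N))"
      proof -
        have "e\<^sup>2 = real N * (real N * t\<^sup>2) * fm\<^sup>2 / 16" by (simp add: e_def power_mult_distrib power2_eq_square)
        then show ?thesis unfolding Nt2 using Npos by (simp add: field_simps power2_eq_square)
      qed
      have e0: "e \<ge> 0" using e1' by simp
      have pbc: "measure M {\<omega>\<in>space M. cnt x \<omega> \<le> real N * F x - e} \<le> real N powr (- c)"
                "measure M {\<omega>\<in>space M. cnt x \<omega> \<ge> real N * F x + e} \<le> real N powr (- c)" for x
      proof -
        have "measure M {\<omega>\<in>space M. cnt x \<omega> \<le> real N * F x - e} \<le> exp (-2 * e\<^sup>2 / (real N * (1 - 0)\<^sup>2))"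
          unfolding cnt_def by (rule hoeff(2)[OF P indep hm hb _ NN e0 eh]) auto
        also have "\<dots> \<le> real N powr (- c)" unfolding ee by (rule exp_powr_bound) (use Npos lnN q2 in auto)
        finally show "measure M {\<omega>\<in>space M. cnt x \<omega> \<le> real N * F x - e} \<le> real N powr (- c)" .
        have "measure M {\<omega>\<in>space M. cnt x \<omega> \<ge> real N * F x + e} \<le> exp (-2 * e\<^sup>2 / (real N * (1 - 0)\<^sup>2))"
          unfolding cnt_def by (rule hoeff(1)[OF P indep hm hb _ NN e0 eh]) auto
        also have "\<dots> \<le> real N powr (- c)" unfolding ee by (rule exp_powr_bound) (use Npos lnN q2 in auto)
        finally show "measure M {\<omega>\<in>space M. cnt x \<omega> \<ge> real N * F x + e} \<le> real N powr (- c)" .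
      qed
      have incl: "{\<omega> \<in> space M. \<bar>winsor_moment_est X \<alpha> \<beta> r N \<omega> - \<mu>\<bar> > A * s N}
                  \<subseteq> E1 \<union> E1' \<union> E2 \<union> E3 \<union> E4 \<union> E5"
      proof (rule subsetI, rule ccontr)
        fix \<omega> assume w: "\<omega> \<in> {\<omega> \<in> space M. \<bar>winsor_moment_est X \<alpha> \<beta> r N \<omega> - \<mu>\<bar> > A * s N}"
          and nw: "\<omega> \<notin> E1 \<union> E1' \<union> E2 \<union> E3 \<union> E4 \<union> E5"
        have sp: "\<omega> \<in> space M" using w by simp
        have n: "\<omega> \<notin> E1" "\<omega> \<notin> E1'" "\<omega> \<notin> E2" "\<omega> \<notin> E3" "\<omega> \<notin> E4" "\<omega> \<notin> E5" using nw by auto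
        have tt: "0 < t" "t < \<delta>" using t0 t\<delta> by (auto simp: t_def)
        have Ne1: "real N * (\<alpha> + fm * t / 2) = \<alpha> * real N + 2 * e" by (simp add: e_def algebra_simps)
        have Ne2: "real N * (\<alpha> - fm * t / 2) = \<alpha> * real N - 2 * e" by (simp add: e_def algebra_simps)
        have Ne3: "real N * (\<beta> + fm * t / 2) = \<beta> * real N + 2 * e" by (simp add: e_def algebra_simps)
        have Ne4: "real N * (\<beta> - fm * t / 2) = \<beta> * real N - 2 * e" by (simp add: e_def algebra_simps)
        define Yk where "Yk = order_stat X N k \<omega>"
        define Ym where "Ym = order_stat X N m \<omega>"
        have k1: "1 \<le> k" "k \<le> N" and m1: "1 \<le> m" "m \<le> N" using kmN by auto
        have "Yk \<le> a + t"
        proof -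
          have c: "cnt (a+t) \<omega> > real N * F (a+t) - e" using n(3) sp by (auto simp: E2_def)
          have "real N * F (a+t) \<ge> real N * (\<alpha> + fm * t / 2)"
            using Qa[OF tt] by (intro mult_left_mono) auto
          then have "cnt (a+t) \<omega> \<ge> real k" using c Ne1 kf e1' by linarith
          then have "k \<le> card {j\<in>{1..N}. X j \<omega> \<le> a + t}" unfolding cnt_card by simp
          then show ?thesis unfolding Yk_def by (simp add: order_stat_le_iff[OF k1])
        qed
        moreover have "Yk > a - t"
        proof -
          have c: "cnt (a-t) \<omega> < real N * F (a-t) + e" using n(4) sp by (auto simp: E3_def)
          have "real N * F (a-t) \<le> real N * (\<alpha> - fm * t / 2)"
            using Qa[OF tt] by (intro mult_left_mono) auto
          then have "cnt (a-t) \<omega> < real k" using c Ne2 kf e1' by linarith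
          then have "\<not> k \<le> card {j\<in>{1..N}. X j \<omega> \<le> a - t}" unfolding cnt_card by simp
          then show ?thesis unfolding Yk_def by (metis not_le order_stat_le_iff[OF k1])
        qed
        moreover have "Ym \<le> b + t"
        proof -
          have c: "cnt (b+t) \<omega> > real N * F (b+t) - e" using n(5) sp by (auto simp: E4_def)
          have "real N * F (b+t) \<ge> real N * (\<beta> + fm * t / 2)"
            using Qb[OF tt] by (intro mult_left_mono) auto
          then have "cnt (b+t) \<omega> \<ge> real m" using c Ne3 mf e1' by linarith
          then have "m \<le> card {j\<in>{1..N}. X j \<omega> \<le> b + t}" unfolding cnt_card by simp
          then show ?thesis unfolding Ym_def by (simp add: order_stat_le_iff[OF m1])
        qed
        moreover have "Ym > b - t"
        proof -
          have c: "cnt (b-t) \<omega> < real N * F (b-t) + e" using n(6) sp by (auto simp: E5_def)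
          have "real N * F (b-t) \<le> real N * (\<beta> - fm * t / 2)"
            using Qb[OF tt] by (intro mult_left_mono) auto
          then have "cnt (b-t) \<omega> < real m" using c Ne4 mf e1' by linarith
          then have "\<not> m \<le> card {j\<in>{1..N}. X j \<omega> \<le> b - t}" unfolding cnt_card by simp
          then show ?thesis unfolding Ym_def by (metis not_le order_stat_le_iff[OF m1])
        qed
        ultimately have dk: "\<bar>Yk - a\<bar> \<le> t" and dm: "\<bar>Ym - b\<bar> \<le> t" by (simp_all add: abs_le_iff)
        have YkYm: "Yk \<le> Ym"
        proof -
          have "m \<le> card {j\<in>{1..N}. X j \<omega> \<le> Ym}" using order_stat_le_iff[OF m1, of X \<omega> Ym] by (simp add: Ym_def)
          then have "k \<le> card {j\<in>{1..N}. X j \<omega> \<le> Ym}" using kmN by simp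
          then show ?thesis unfolding Yk_def by (simp add: order_stat_le_iff[OF k1])
        qed
        have est: "winsor_moment_est X \<alpha> \<beta> r N \<omega> = 1 / real N * (\<Sum>j\<in>{1..N}. winsor Yk Ym (X j \<omega>) ^ r)"
          unfolding Yk_def Ym_def k_def m_def
          by (rule est_identity) (use kmN in \<open>auto simp: k_def m_def\<close>)
        have pt: "\<bar>winsor Yk Ym x ^ r - g0 x\<bar> \<le> K * t" for x
        proof -
          have tl1: "t \<le> 1" using t1 by (simp add: t_def)
          have "\<bar>Yk\<bar> \<le> B" "\<bar>Ym\<bar> \<le> B" using dk dm tl1 unfolding B_def by (simp_all add: abs_le_iff) linarith+
          then have b1: "\<bar>winsor Yk Ym x\<bar> \<le> B"
            using winsor_bound[OF YkYm, of x] by linarith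
          have b2: "\<bar>winsor a b x\<bar> \<le> B" using winsor_bound[OF ab, of x] by (simp add: B_def)
          have "\<bar>winsor Yk Ym x ^ r - g0 x\<bar> \<le> K * \<bar>winsor Yk Ym x - winsor a b x\<bar>"
            unfolding g0_def K_def by (rule pow_lip[OF b1 b2])
          also have "\<dots> \<le> K * t"
            using winsor_lip[OF ab YkYm, of x] dk dm K0 by (intro mult_left_mono) (auto split: if_splits)
          finally show ?thesis .
        qed
        have "\<bar>(\<Sum>j\<in>{1..N}. winsor Yk Ym (X j \<omega>) ^ r) - Sg \<omega>\<bar> \<le> real N * (K * t)"
        proof -
          have "\<bar>(\<Sum>j\<in>{1..N}. winsor Yk Ym (X j \<omega>) ^ r) - Sg \<omega>\<bar>
                = \<bar>\<Sum>j\<in>{1..N}. winsor Yk Ym (X j \<omega>) ^ r - g0 (X j \<omega>)\<bar>"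
            by (simp add: Sg_def sum_subtractf)
          also have "\<dots> \<le> (\<Sum>j\<in>{1..N}. \<bar>winsor Yk Ym (X j \<omega>) ^ r - g0 (X j \<omega>)\<bar>)" by (rule sum_abs)
          also have "\<dots> \<le> (\<Sum>j\<in>{1..N}. K * t)" by (rule sum_mono) (rule pt)
          finally show ?thesis by simp
        qed
        then have d0: "\<bar>(\<Sum>j\<in>{1..N}. winsor Yk Ym (X j \<omega>) ^ r) - Sg \<omega>\<bar> / real N \<le> K * t"
          using Npos by (simp add: divide_le_eq mult_ac)
        have "winsor_moment_est X \<alpha> \<beta> r N \<omega> - Sg \<omega> / real N
              = ((\<Sum>j\<in>{1..N}. winsor Yk Ym (X j \<omega>) ^ r) - Sg \<omega>) / real N"
          unfolding est by (simp add: diff_divide_distrib)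
        then have d1: "\<bar>winsor_moment_est X \<alpha> \<beta> r N \<omega> - Sg \<omega> / real N\<bar> \<le> K * t"
          using d0 Npos by (simp add: abs_divide)
        have "Sg \<omega> < real N * \<mu> + real N * t" "Sg \<omega> > real N * \<mu> - real N * t"
          using n(1,2) sp by (auto simp: E1_def E1'_def)
        then have "Sg \<omega> / real N < \<mu> + t" "Sg \<omega> / real N > \<mu> - t" using Npos
          by (simp_all add: divide_less_eq less_divide_eq algebra_simps)
        then have d2: "\<bar>Sg \<omega> / real N - \<mu>\<bar> < t" by linarith
        have "\<bar>winsor_moment_est X \<alpha> \<beta> r N \<omega> - \<mu>\<bar> \<le> K * t + t" using d1 d2 by linarith
        also have "K * t + t = (K + 1) * C * s N" by (simp add: t_def algebra_simps)
        also have "\<dots> \<le> A * s N" unfolding A_def using s0 by (simp add: algebra_simps)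
        finally show False using w by simp
      qed
      have "measure M {\<omega> \<in> space M. \<bar>winsor_moment_est X \<alpha> \<beta> r N \<omega> - \<mu>\<bar> > A * s N}
             \<le> measure M (E1 \<union> E1' \<union> E2 \<union> E3 \<union> E4 \<union> E5)"
        by (rule finite_measure_mono[OF incl]) (use Es in auto)
      also have "\<dots> \<le> measure M (E1 \<union> E1' \<union> E2 \<union> E3 \<union> E4) + measure M E5"
        by (rule measure_Un_le) (use Es in auto)
      also have "measure M (E1 \<union> E1' \<union> E2 \<union> E3 \<union> E4) \<le> measure M (E1 \<union> E1' \<union> E2 \<union> E3) + measure M E4"
        by (rule measure_Un_le) (use Es in auto)
      also have "measure M (E1 \<union> E1' \<union> E2 \<union> E3) \<le> measure M (E1 \<union> E1' \<union> E2) + measure M E3"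
        by (rule measure_Un_le) (use Es in auto)
      also have "measure M (E1 \<union> E1' \<union> E2) \<le> measure M (E1 \<union> E1') + measure M E2"
        by (rule measure_Un_le) (use Es in auto)
      also have "measure M (E1 \<union> E1') \<le> measure M E1 + measure M E1'"
        by (rule measure_Un_le) (use Es in auto)
      finally show ?thesis
        using pb1 pb1' pbc[of "a+t"] pbc[of "a-t"] pbc[of "b+t"] pbc[of "b-t"]
        unfolding E2_def E3_def E4_def E5_def by linarith
    qed
    have ev1: "eventually (\<lambda>N::nat. N \<ge> 2) sequentially" by (rule eventually_ge_at_top)
    have ev2: "eventually (\<lambda>N::nat. nat \<lfloor>\<alpha> * real N\<rfloor> + 1 < nat \<lfloor>\<beta> * real N\<rfloor>) sequentially"
    proof -
      have "eventually (\<lambda>N::nat. N \<ge> nat \<lceil>3 / (\<beta> - \<alpha>)\<rceil>) sequentially" by (rule eventually_ge_at_top)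
      then show ?thesis
      proof (rule eventually_mono)
        fix N :: nat assume "N \<ge> nat \<lceil>3 / (\<beta> - \<alpha>)\<rceil>"
        then have "real N \<ge> 3 / (\<beta> - \<alpha>)" by linarith
        then have h: "(\<beta> - \<alpha>) * real N \<ge> 3" using al by (simp add: field_simps)
        have aN: "0 \<le> \<alpha> * real N" "0 \<le> \<beta> * real N" using al by auto
        have "real (nat \<lfloor>\<alpha> * real N\<rfloor>) + 1 < real (nat \<lfloor>\<beta> * real N\<rfloor>)"
          using floor_facts[OF aN(1)] floor_facts[OF aN(2)] h by (simp add: algebra_simps)
        then show "nat \<lfloor>\<alpha> * real N\<rfloor> + 1 < nat \<lfloor>\<beta> * real N\<rfloor>" by linarith
      qed
    qed
    have ev3: "eventually (\<lambda>N. C * s N < min \<delta> 1) sequentially"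
    proof -
      have "((\<lambda>N. C * s N) \<longlongrightarrow> C * 0) sequentially"
        unfolding s_def by (intro tendsto_mult tendsto_const asy1)
      then show ?thesis using \<delta> by (intro order_tendstoD(2)) auto
    qed
    have ev4: "eventually (\<lambda>N. real N * (C * s N) * fm / 4 \<ge> 1) sequentially"
    proof -
      have "eventually (\<lambda>N. real N * s N \<ge> 4 / (C * fm)) sequentially"
        using asy2 unfolding s_def filterlim_at_top by blast
      then show ?thesis
      proof (rule eventually_mono)
        fix N assume h: "real N * s N \<ge> 4 / (C * fm)"
        have "real N * (C * s N) * fm / 4 = (real N * s N) * (C * fm / 4)" by (simp add: algebra_simps)
        also have "\<dots> \<ge> (4 / (C * fm)) * (C * fm / 4)" using h C0 fm by (intro mult_right_mono) auto
        also have "(4 / (C * fm)) * (C * fm / 4) = 1" using C0 fm by simp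
        finally show "real N * (C * s N) * fm / 4 \<ge> 1" .
      qed
    qed
    show "\<exists>A>0. (\<lambda>N. measure M {\<omega> \<in> space M.
        \<bar>winsor_moment_est X \<alpha> \<beta> r N \<omega>
         - prob_space.expectation M (\<lambda>\<omega>. winsor (quantile F \<alpha>) (quantile F \<beta>) (X 1 \<omega>) ^ r)\<bar>
        > A * sqrt (ln (real N) / real N)}) \<in> O(\<lambda>N. real N powr (- c))"
    proof (intro exI[of _ A] conjI A0 bigoI[where c=6])
      show "eventually (\<lambda>N. norm (measure M {\<omega> \<in> space M.
        \<bar>winsor_moment_est X \<alpha> \<beta> r N \<omega>
         - prob_space.expectation M (\<lambda>\<omega>. winsor (quantile F \<alpha>) (quantile F \<beta>) (X 1 \<omega>) ^ r)\<bar>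
        > A * sqrt (ln (real N) / real N)}) \<le> 6 * norm (real N powr (- c))) at_top"
        using eventually_conj[OF ev1 eventually_conj[OF ev2 eventually_conj[OF ev3 ev4]]]
      proof (rule eventually_mono)
        fix N :: nat
        assume h: "2 \<le> N \<and> nat \<lfloor>\<alpha> * real N\<rfloor> + 1 < nat \<lfloor>\<beta> * real N\<rfloor> \<and> C * s N < min \<delta> 1 \<and>
                   1 \<le> real N * (C * s N) * fm / 4"
        have "measure M {\<omega> \<in> space M. \<bar>winsor_moment_est X \<alpha> \<beta> r N \<omega> - \<mu>\<bar> > A * s N}
                 \<le> 6 * real N powr (- c)"
          using h by (intro key) auto
        then show "norm (measure M {\<omega> \<in> space M.
        \<bar>winsor_moment_est X \<alpha> \<beta> r N \<omega>
         - prob_space.expectation M (\<lambda>\<omega>. winsor (quantile F \<alpha>) (quantile F \<beta>) (X 1 \<omega>) ^ r)\<bar>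
        > A * sqrt (ln (real N) / real N)}) \<le> 6 * norm (real N powr (- c))"
          unfolding \<mu>_eq s_def by simp
      qed
    qed
  qed
qed

end
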